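(* Let $n\ge4$ and consider $n$ agents with private types $t_i\in[0,\infty)$ and valuations $v_i(t_i,S)=|S|\cdot t_i$ for winning sets $S\ni i$ (and $0$ if $i\notin S$), and suppose the seller incurs a cost of $n$ for each copy of the good sold, so the seller's profit from winning set $S$ with prices $(p_i)_{i\in S}$ is $\sum_{i\in S}p_i-n|S|$. Then for every constant $L\ge1$ there is no universally truthful mechanism whose expected profit is at least $\frac1L\mathcal{F}^{(3)}_{\mathrm{cost}}(t)$ for every $t\in[0,\infty)^n$, where $\mathcal{F}^{(3)}_{\mathrm{cost}}(t)=\max\{(c-n)|S| : c\ge0,\ S\subseteq[n],\ |S|\ge3,\ v_i(t_i,S)\ge c\ \forall i\in S\}$. In particular, with a positive per-copy cost the competitive ratio can be unbounded.
   Context: A deterministic mechanism maps reported types to a winning set $S$ and prices $p_i$ for $i\in S$ (losers pay $0$); agent utility is $v_i(t_i,S)-p_i$ if $i\in S$, else $0$. It is truthful if reporting the true type maximizes every agent's utility for all fixed reports of the others, and individually rational if truthful agents get nonnegative utility. A universally truthful mechanism is a probability distribution over deterministic truthful, individually rational mechanisms. *)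

theory Defs
  imports "HOL-Probability.Probability"
begin

text \<open>A deterministic mechanism maps a
reported profile to a winning set and a price vector (prices of losers are
irrelevant: losers pay 0).\<close>

type_synonym mechanism = "(nat \<Rightarrow> real) \<Rightarrow> nat set \<times> (nat \<Rightarrow> real)"

definition valid_profile :: "nat \<Rightarrow> (nat \<Rightarrow> real) \<Rightarrow> bool" where
  "valid_profile n t \<longleftrightarrow> (\<forall>j<n. t j \<ge> 0)"

definition valuation :: "nat \<Rightarrow> real \<Rightarrow> nat set \<Rightarrow> real" where
  "valuation i ti S = (if i \<in> S then real (card S) * ti else 0)"

definition utility :: "nat \<Rightarrow> real \<Rightarrow> nat set \<times> (nat \<Rightarrow> real) \<Rightarrow> real" where
  "utility i ti out = (if i \<in> fst out then valuation i ti (fst out) - snd out i else 0)"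

definition truthful :: "nat \<Rightarrow> mechanism \<Rightarrow> bool" where
  "truthful n M \<longleftrightarrow>
     (\<forall>t i x. valid_profile n t \<and> i < n \<and> x \<ge> 0 \<longrightarrow>
        utility i (t i) (M (t(i := x))) \<le> utility i (t i) (M t))"

definition indiv_rational :: "nat \<Rightarrow> mechanism \<Rightarrow> bool" where
  "indiv_rational n M \<longleftrightarrow>
     (\<forall>t i. valid_profile n t \<and> i < n \<longrightarrow> utility i (t i) (M t) \<ge> 0)"

definition det_mechanism :: "nat \<Rightarrow> mechanism \<Rightarrow> bool" where
  "det_mechanism n M \<longleftrightarrow> (\<forall>t. valid_profile n t \<longrightarrow> fst (M t) \<subseteq> {..<n})"

definition profit_cost :: "nat \<Rightarrow> nat set \<times> (nat \<Rightarrow> real) \<Rightarrow> real" where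
  "profit_cost n out = (\<Sum>i\<in>fst out. snd out i) - real n * real (card (fst out))"

definition F3_cost :: "nat \<Rightarrow> (nat \<Rightarrow> real) \<Rightarrow> real" where
  "F3_cost n t = Sup {(c - real n) * real (card S) | c S.
       c \<ge> 0 \<and> S \<subseteq> {..<n} \<and> card S \<ge> 3 \<and> (\<forall>i\<in>S. valuation i (t i) S \<ge> c)}"

end

theory Submission
  imports Defs
begin


definition full :: "nat \<Rightarrow> nat set \<times> (nat \<Rightarrow> real) \<Rightarrow> bool" where
  "full n out \<longleftrightarrow> fst out = {..<n}"
definition part :: "nat \<Rightarrow> nat set \<times> (nat \<Rightarrow> real) \<Rightarrow> bool" where
  "part n out \<longleftrightarrow> fst out \<noteq> {} \<and> fst out \<noteq> {..<n}"
definition dg :: "nat \<Rightarrow> real \<Rightarrow> nat \<Rightarrow> real" where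
  "dg n m = (\<lambda>j. if j < n then 1 + m else 0)"
definition pth :: "(nat \<Rightarrow> real) \<Rightarrow> (nat \<Rightarrow> real) \<Rightarrow> nat \<Rightarrow> nat \<Rightarrow> real" where
  "pth c d k = (\<lambda>j. if j < k then d j else c j)"

lemma util_in: "i \<in> fst out \<Longrightarrow> utility i ti out = real (card (fst out)) * ti - snd out i"
  by (simp add: utility_def valuation_def)
lemma util_out: "i \<notin> fst out \<Longrightarrow> utility i ti out = 0"
  by (simp add: utility_def)

lemma valid_upd: "valid_profile n t \<Longrightarrow> x \<ge> 0 \<Longrightarrow> valid_profile n (t(i:=x))"
  by (simp add: valid_profile_def)

lemma L_mono:
  assumes tr: "truthful n M" and dm: "det_mechanism n M" and v: "valid_profile n t"
    and i: "i < n" and win: "i \<in> fst (M t)" and y: "t i \<le> y"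
  shows "i \<in> fst (M (t(i:=y)))"
proof (rule ccontr)
  assume nw: "i \<notin> fst (M (t(i:=y)))"
  have ti0: "t i \<ge> 0" using v i by (simp add: valid_profile_def)
  have y0: "y \<ge> 0" using ti0 y by linarith
  have v': "valid_profile n (t(i:=y))" using valid_upd[OF v y0] .
  have "y \<noteq> t i" using nw win by (metis fun_upd_triv)
  hence ylt: "t i < y" using y by linarith
  let ?S = "fst (M t)" let ?p = "snd (M t) i"
  have fin: "finite ?S" using dm v by (meson det_mechanism_def finite_lessThan finite_subset)
  have cpos: "card ?S \<ge> 1" using fin win by (metis One_nat_def Suc_leI card_gt_0_iff empty_iff)
  have "utility i (t i) (M (t(i:=y))) \<le> utility i (t i) (M t)"
    using tr v i y0 by (simp add: truthful_def)
  hence a1: "0 \<le> real (card ?S) * t i - ?p" using nw win by (simp add: util_in util_out)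
  have "utility i ((t(i:=y)) i) (M ((t(i:=y))(i := t i))) \<le> utility i ((t(i:=y)) i) (M (t(i:=y)))"
    using tr v' i ti0 unfolding truthful_def by blast
  hence a2: "real (card ?S) * y - ?p \<le> 0" using nw win by (simp add: util_in util_out)
  have "real (card ?S) * t i < real (card ?S) * y" using cpos ylt by simp
  thus False using a1 a2 by linarith
qed

lemma L_pay:
  assumes tr: "truthful n M" and ir: "indiv_rational n M" and v: "valid_profile n t"
    and i: "i < n" and x: "x \<ge> 0" and f1: "full n (M t)" and f2: "full n (M (t(i:=x)))"
  shows "snd (M t) i \<le> real n * x"
proof -
  have v': "valid_profile n (t(i:=x))" using valid_upd[OF v x] .
  have in1: "i \<in> fst (M t)" and in2: "i \<in> fst (M (t(i:=x)))" using f1 f2 i by (auto simp: full_def)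
  have c1: "card (fst (M t)) = n" and c2: "card (fst (M (t(i:=x)))) = n" using f1 f2 by (auto simp: full_def)
  have "utility i (t i) (M (t(i:=x))) \<le> utility i (t i) (M t)" using tr v i x by (simp add: truthful_def)
  hence a: "real n * t i - snd (M (t(i:=x))) i \<le> real n * t i - snd (M t) i"
    using in1 in2 c1 c2 by (simp add: util_in)
  have "utility i ((t(i:=x)) i) (M (t(i:=x))) \<ge> 0" using ir v' i unfolding indiv_rational_def by blast
  hence b: "real n * x - snd (M (t(i:=x))) i \<ge> 0" using in2 c2 by (simp add: util_in)
  show ?thesis using a b by linarith
qed

lemma L_region:
  assumes dm: "det_mechanism n M" and ir: "indiv_rational n M" and v: "valid_profile n t"
    and bnd: "\<forall>i<n. 1 \<le> t i \<and> t i \<le> 1 + m" and m0: "0 \<le> m" and nm: "real n * m \<le> 1/2"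
  shows "profit_cost n (M t) \<le> real n * real n * m"
    and "part n (M t) \<Longrightarrow> profit_cost n (M t) \<le> -1/2"
    and "\<not> full n (M t) \<Longrightarrow> profit_cost n (M t) \<le> 0"
proof -
  let ?S = "fst (M t)"
  define k where "k = card ?S"
  have sub: "?S \<subseteq> {..<n}" using dm v by (simp add: det_mechanism_def)
  have fin: "finite ?S" using sub finite_subset by blast
  have pay: "\<forall>i\<in>?S. snd (M t) i \<le> real k * (1 + m)"
  proof
    fix i assume iS: "i \<in> ?S"
    hence i: "i < n" using sub by auto
    have "utility i (t i) (M t) \<ge> 0" using ir v i by (simp add: indiv_rational_def)
    hence "snd (M t) i \<le> real k * t i" using iS by (simp add: util_in k_def)
    also have "\<dots> \<le> real k * (1+m)" using bnd i by (simp add: mult_left_mono)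
    finally show "snd (M t) i \<le> real k * (1 + m)" .
  qed
  have "(\<Sum>i\<in>?S. snd (M t) i) \<le> (\<Sum>i\<in>?S. real k * (1+m))" using pay by (intro sum_mono) auto
  hence P: "profit_cost n (M t) \<le> real k * (real k * (1+m) - real n)"
    by (simp add: profit_cost_def k_def algebra_simps)
  have nf: "real k * (real k * (1+m) - real n) \<le> - real k / 2" if nfull: "\<not> full n (M t)"
  proof -
    have "?S \<noteq> {..<n}" using nfull by (simp add: full_def)
    hence "?S \<subset> {..<n}" using sub by auto
    hence "card ?S < card {..<n}" by (rule psubset_card_mono[OF finite_lessThan])
    hence "k < n" by (simp add: k_def)
    hence "k + 1 \<le> n" by simp
    hence K: "real k \<le> real n - 1" by (metis of_nat_1 of_nat_add of_nat_le_iff le_diff_eq)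
    have "real k * (1+m) \<le> (real n - 1) * (1+m)" using K m0 by (simp add: mult_right_mono)
    also have "\<dots> \<le> real n - 1/2" using nm m0 by (simp add: algebra_simps)
    finally have "real k * (1+m) - real n \<le> -1/2" by simp
    hence "real k * (real k * (1+m) - real n) \<le> real k * (-1/2)"
      using mult_left_mono[of "real k * (1+m) - real n" "-1/2" "real k"] by simp
    thus ?thesis by simp
  qed
  show "profit_cost n (M t) \<le> real n * real n * m"
  proof (cases "full n (M t)")
    case True
    hence "k = n" by (simp add: full_def k_def)
    thus ?thesis using P by (simp add: algebra_simps)
  next
    case False
    have "0 \<le> real n * real n * m" using m0 by simp
    have "- real k / 2 \<le> 0" by simp
    thus ?thesis using P nf[OF False] \<open>0 \<le> real n * real n * m\<close> by linarith
  qed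
  show "profit_cost n (M t) \<le> 0" if nfl: "\<not> full n (M t)"
  proof -
    have "- real k / 2 \<le> 0" by simp
    thus ?thesis using P nf[OF nfl] by linarith
  qed
  show "part n (M t) \<Longrightarrow> profit_cost n (M t) \<le> -1/2"
  proof -
    assume pt: "part n (M t)"
    hence "\<not> full n (M t)" by (simp add: part_def full_def)
    moreover have "k \<ge> 1" using pt fin unfolding part_def k_def
      by (metis One_nat_def Suc_leI card_gt_0_iff)
    ultimately have "profit_cost n (M t) \<le> - real k / 2" using P nf by (meson order_trans)
    moreover have "- real k / 2 \<le> -1/2" using \<open>k \<ge> 1\<close> by simp
    ultimately show ?thesis by linarith
  qed
qed



lemma pth_0: "pth c d 0 = c" by (simp add: pth_def)
lemma pth_Suc: "pth c d (Suc k) = (pth c d k)(k := d k)" by (auto simp: pth_def)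
lemma pth_n: "\<forall>j\<ge>n. c j = d j \<Longrightarrow> pth c d n = d" by (auto simp: pth_def)
lemma pth_valid: "valid_profile n c \<Longrightarrow> valid_profile n d \<Longrightarrow> valid_profile n (pth c d k)"
  by (simp add: valid_profile_def pth_def)
lemma pth_bnd: "\<forall>j<n. lo \<le> c j \<and> c j \<le> hi \<Longrightarrow> \<forall>j<n. lo \<le> d j \<and> d j \<le> hi
   \<Longrightarrow> \<forall>j<n. lo \<le> pth c d k j \<and> pth c d k j \<le> hi"
  by (simp add: pth_def)

lemma L_step:
  assumes tr: "truthful n M" and dm: "det_mechanism n M" and v: "valid_profile n t"
    and k: "k < n" and y: "t k \<le> y" and f: "full n (M t)"
  shows "full n (M (t(k:=y))) \<or> part n (M (t(k:=y)))"
proof -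
  have "k \<in> fst (M t)" using f k by (simp add: full_def)
  hence "k \<in> fst (M (t(k:=y)))" using L_mono[OF tr dm v k _ y] by blast
  thus ?thesis by (auto simp: full_def part_def)
qed

lemma L_chain:
  assumes tr: "truthful n M" and dm: "det_mechanism n M"
    and vc: "valid_profile n c" and vd: "valid_profile n d" and le: "\<forall>j. c j \<le> d j"
  shows "k \<le> n \<Longrightarrow> (of_bool (full n (M c)) :: real) \<le> of_bool (full n (M (pth c d k)))
            + (\<Sum>j\<in>{1..k}. of_bool (part n (M (pth c d j))))"
proof (induction k)
  case 0
  show ?case by (simp add: pth_0)
next
  case (Suc k)
  hence IH: "(of_bool (full n (M c)) :: real) \<le> of_bool (full n (M (pth c d k)))
            + (\<Sum>j\<in>{1..k}. of_bool (part n (M (pth c d j))))" by simp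
  have kn: "k < n" using Suc.prems by simp
  have step: "(of_bool (full n (M (pth c d k))) :: real) \<le> of_bool (full n (M (pth c d (Suc k))))
       + of_bool (part n (M (pth c d (Suc k))))"
  proof (cases "full n (M (pth c d k))")
    case True
    have "pth c d k k \<le> d k" using le by (simp add: pth_def)
    hence "full n (M ((pth c d k)(k := d k))) \<or> part n (M ((pth c d k)(k := d k)))"
      by (rule L_step[OF tr dm pth_valid[OF vc vd] kn _ True])
    hence "full n (M (pth c d (Suc k))) \<or> part n (M (pth c d (Suc k)))"
      by (simp only: pth_Suc)
    thus ?thesis using True by auto
  next
    case False
    thus ?thesis by simp
  qed
  have "(\<Sum>j\<in>{1..Suc k}. (of_bool (part n (M (pth c d j))) :: real))
      = (\<Sum>j\<in>{1..k}. of_bool (part n (M (pth c d j)))) + of_bool (part n (M (pth c d (Suc k))))"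
    by simp
  thus ?case using IH step by linarith
qed

lemma dg_valid: "0 \<le> a \<Longrightarrow> valid_profile n (dg n a)"
  by (simp add: valid_profile_def dg_def)

lemma L_diag:
  assumes tr: "truthful n M" and dm: "det_mechanism n M" and ir: "indiv_rational n M"
    and b0: "0 \<le> b" and ba: "b \<le> a" and na: "real n * a \<le> 1/2"
  shows "profit_cost n (M (dg n a)) \<le> real n * real n * b + real n * a *
     (\<Sum>i<n. of_bool (full n (M (dg n a)) \<and> \<not> full n (M ((dg n a)(i := 1 + b)))))"
proof (cases "full n (M (dg n a))")
  case False
  have a0: "0 \<le> a" using b0 ba by linarith
  have "profit_cost n (M (dg n a)) \<le> 0"
    using L_region(3)[OF dm ir dg_valid[OF a0], of a] a0 na False by (simp add: dg_def)
  moreover have "0 \<le> real n * real n * b + real n * a *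
     (\<Sum>i<n. of_bool (full n (M (dg n a)) \<and> \<not> full n (M ((dg n a)(i := 1 + b)))) :: real)"
    using b0 a0 by (intro add_nonneg_nonneg mult_nonneg_nonneg sum_nonneg) auto
  ultimately show ?thesis by linarith
next
  case True
  let ?t = "dg n a"
  have a0: "0 \<le> a" using b0 ba by linarith
  have v: "valid_profile n ?t" using dg_valid[OF a0] .
  have S: "fst (M ?t) = {..<n}" using True by (simp add: full_def)
  have p: "snd (M ?t) i \<le> real n * (1 + b) + real n * a * of_bool (\<not> full n (M (?t(i := 1+b))))"
    if i: "i < n" for i
  proof (cases "full n (M (?t(i := 1+b)))")
    case True2: True
    have "snd (M ?t) i \<le> real n * (1 + b)" using L_pay[OF tr ir v i _ True True2] b0 by simp
    thus ?thesis using True2 by simp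
  next
    case False
    have "utility i (?t i) (M ?t) \<ge> 0" using ir v i by (simp add: indiv_rational_def)
    hence "snd (M ?t) i \<le> real n * (1 + a)" using i S by (simp add: util_in dg_def)
    also have "\<dots> \<le> real n * (1 + b) + real n * a" using b0 by (simp add: algebra_simps)
    finally show ?thesis using False by simp
  qed
  define X where "X = (\<Sum>i<n. (of_bool (\<not> full n (M (?t(i := 1+b)))) :: real))"
  have "profit_cost n (M ?t) = (\<Sum>i<n. snd (M ?t) i) - real n * real n"
    by (simp add: profit_cost_def S)
  also have "\<dots> \<le> (\<Sum>i<n. real n * (1 + b) + real n * a * of_bool (\<not> full n (M (?t(i := 1+b))))) - real n * real n"
    using p by (intro diff_right_mono sum_mono) auto
  also have "\<dots> = real n * real n * b + real n * a * X"
    unfolding X_def by (simp only: sum.distrib sum_constant card_lessThan sum_distrib_left[symmetric]) (simp add: algebra_simps)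
  also have "X = (\<Sum>i<n. of_bool (full n (M (dg n a)) \<and> \<not> full n (M ((dg n a)(i := 1 + b)))))"
    unfolding X_def using True by simp
  finally show ?thesis .
qed



lemma part_bound:
  assumes dm: "det_mechanism n M" and ir: "indiv_rational n M" and v: "valid_profile n t"
    and bnd: "\<forall>i<n. 1 \<le> t i \<and> t i \<le> 1 + m" and m0: "0 \<le> m" and nm: "real n * m \<le> 1/2"
  shows "(of_bool (part n (M t)) :: real) \<le> 2 * (real n * real n * m) - 2 * profit_cost n (M t)"
proof (cases "part n (M t)")
  case True
  have "profit_cost n (M t) \<le> -1/2" using L_region(2)[OF dm ir v bnd m0 nm True] .
  moreover have "0 \<le> real n * real n * m" using m0 by simp
  ultimately show ?thesis using True by simp
next
  case False
  have "profit_cost n (M t) \<le> real n * real n * m" using L_region(1)[OF dm ir v bnd m0 nm] .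
  thus ?thesis using False by simp
qed

lemma sum_bound_aux:
  fixes P f :: "nat \<Rightarrow> real"
  assumes "\<forall>k\<in>{1..n}. P k \<le> 2 * C - 2 * f k"
  shows "(\<Sum>k\<in>{1..n}. P k) \<le> real n * (2 * C) - 2 * (\<Sum>k\<in>{1..n}. f k)"
proof -
  have "(\<Sum>k\<in>{1..n}. P k) \<le> (\<Sum>k\<in>{1..n}. 2 * C - 2 * f k)" using assms by (intro sum_mono) auto
  also have "\<dots> = real n * (2 * C) - 2 * (\<Sum>k\<in>{1..n}. f k)"
    by (simp add: sum_subtractf sum_distrib_left)
  finally show ?thesis .
qed

lemma key_det:
  assumes tr: "truthful n M" and dm: "det_mechanism n M" and ir: "indiv_rational n M"
    and b0: "0 \<le> b" and ba: "b \<le> a" and a0: "0 < a" and na: "real n * a \<le> 1/2"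
    and n1: "n \<ge> 1"
  shows "profit_cost n (M (dg n a)) / (real n * a)
     + 2 * real n * (\<Sum>k\<in>{1..n}. profit_cost n (M (pth (dg n b) (dg n a) k)))
     + 2 * (\<Sum>i<n. \<Sum>k\<in>{1..n}. profit_cost n (M (pth (dg n b) ((dg n a)(i := 1 + b)) k)))
     \<le> real n * (b / a) + real n * (of_bool (full n (M (dg n a))) - of_bool (full n (M (dg n b))))
        + 4 * real n ^ 4 * a"
proof -
  define d where "d = dg n a"
  define c where "c = dg n b"
  define l where "l i = d(i := 1 + b)" for i
  define A :: "nat \<Rightarrow> real" where "A i = of_bool (full n (M d) \<and> \<not> full n (M (l i)))" for i
  define X :: real where "X = of_bool (full n (M c) \<and> \<not> full n (M d))"
  define Y :: "nat \<Rightarrow> real" where "Y i = of_bool (full n (M c) \<and> \<not> full n (M (l i)))" for i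
  define fU where "fU k = profit_cost n (M (pth c d k))" for k
  define fV where "fV i k = profit_cost n (M (pth c (l i) k))" for i k
  define PU :: "nat \<Rightarrow> real" where "PU k = of_bool (part n (M (pth c d k)))" for k
  define PV :: "nat \<Rightarrow> nat \<Rightarrow> real" where "PV i k = of_bool (part n (M (pth c (l i) k)))" for i k
  define bd :: real where "bd = of_bool (full n (M d))"
  define bc :: real where "bc = of_bool (full n (M c))"
  have a0': "0 \<le> a" using a0 by simp
  have vc: "valid_profile n c" unfolding c_def using dg_valid[OF b0] .
  have vd: "valid_profile n d" unfolding d_def using dg_valid[OF a0'] .
  have vl: "valid_profile n (l i)" for i unfolding l_def using valid_upd[OF vd] b0 by simp
  have lecd: "\<forall>j. c j \<le> d j" using ba by (simp add: c_def d_def dg_def)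
  have lecl: "\<forall>j. c j \<le> l i j" if "i < n" for i using ba that by (simp add: c_def d_def l_def dg_def)
  have eqcd: "\<forall>j\<ge>n. c j = d j" by (simp add: c_def d_def dg_def)
  have eqcl: "\<forall>j\<ge>n. c j = l i j" if "i < n" for i using that by (simp add: c_def d_def l_def dg_def)
  have bc': "\<forall>j<n. 1 \<le> c j \<and> c j \<le> 1 + a" using b0 ba by (simp add: c_def dg_def)
  have bd': "\<forall>j<n. 1 \<le> d j \<and> d j \<le> 1 + a" using a0 by (simp add: d_def dg_def)
  have bl': "\<forall>j<n. 1 \<le> l i j \<and> l i j \<le> 1 + a" for i using a0 b0 ba by (simp add: l_def d_def dg_def)
  have h1: "profit_cost n (M d) \<le> real n * real n * b + real n * a * (\<Sum>i<n. A i)"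
    using L_diag[OF tr dm ir b0 ba na] unfolding A_def l_def d_def .
  have npos: "0 < real n * a" using n1 a0 by simp
  have hdiv: "profit_cost n (M d) / (real n * a) \<le> real n * (b / a) + (\<Sum>i<n. A i)"
  proof -
    have "profit_cost n (M d) / (real n * a) \<le> (real n * real n * b + real n * a * (\<Sum>i<n. A i)) / (real n * a)"
      using h1 npos by (simp add: divide_right_mono)
    also have "\<dots> = real n * (b / a) + (\<Sum>i<n. A i)" using a0 n1 by (simp add: field_simps)
    finally show ?thesis .
  qed
  have h2: "A i \<le> (bd - bc) + X + Y i" for i
    unfolding A_def X_def Y_def bd_def bc_def by auto
  have h3: "X \<le> (\<Sum>k\<in>{1..n}. PU k)"
  proof -
    have "bc \<le> bd + (\<Sum>k\<in>{1..n}. PU k)"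
      using L_chain[OF tr dm vc vd lecd, of n] pth_n[OF eqcd] unfolding bc_def bd_def PU_def by simp
    moreover have "0 \<le> (\<Sum>k\<in>{1..n}. PU k)" unfolding PU_def by (intro sum_nonneg) auto
    ultimately show ?thesis unfolding X_def bc_def bd_def by auto
  qed
  have h4: "Y i \<le> (\<Sum>k\<in>{1..n}. PV i k)" if i: "i < n" for i
  proof -
    have "bc \<le> of_bool (full n (M (l i))) + (\<Sum>k\<in>{1..n}. PV i k)"
      using L_chain[OF tr dm vc vl lecl[OF i], of n] pth_n[OF eqcl[OF i]] unfolding bc_def PV_def by simp
    moreover have "0 \<le> (\<Sum>k\<in>{1..n}. PV i k)" unfolding PV_def by (intro sum_nonneg) auto
    ultimately show ?thesis unfolding Y_def bc_def by auto
  qed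
  have h5: "\<forall>k\<in>{1..n}. PU k \<le> 2 * (real n * real n * a) - 2 * fU k"
    unfolding PU_def fU_def
    using part_bound[OF dm ir pth_valid[OF vc vd] pth_bnd[OF bc' bd'] a0' na] by blast
  have h6: "\<forall>k\<in>{1..n}. PV i k \<le> 2 * (real n * real n * a) - 2 * fV i k" for i
    unfolding PV_def fV_def
    using part_bound[OF dm ir pth_valid[OF vc vl] pth_bnd[OF bc' bl'] a0' na] by blast
  have sU: "(\<Sum>k\<in>{1..n}. PU k) \<le> real n * (2 * (real n * real n * a)) - 2 * (\<Sum>k\<in>{1..n}. fU k)"
    using sum_bound_aux[OF h5] .
  have sV: "(\<Sum>k\<in>{1..n}. PV i k) \<le> real n * (2 * (real n * real n * a)) - 2 * (\<Sum>k\<in>{1..n}. fV i k)" for i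
    using sum_bound_aux[OF h6] .
  have sA: "(\<Sum>i<n. A i) \<le> (\<Sum>i<n. (bd - bc) + X + Y i)" using h2 by (intro sum_mono) auto
  also have "\<dots> = real n * (bd - bc) + real n * X + (\<Sum>i<n. Y i)"
    by (simp only: sum.distrib sum_constant card_lessThan)
  finally have sA': "(\<Sum>i<n. A i) \<le> real n * (bd - bc) + real n * X + (\<Sum>i<n. Y i)" .
  have sY: "(\<Sum>i<n. Y i) \<le> (\<Sum>i<n. real n * (2 * (real n * real n * a)) - 2 * (\<Sum>k\<in>{1..n}. fV i k))"
    using h4 sV by (intro sum_mono) (meson lessThan_iff order_trans)
  also have "\<dots> = real n * (real n * (2 * (real n * real n * a))) - 2 * (\<Sum>i<n. \<Sum>k\<in>{1..n}. fV i k)"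
    by (simp add: sum_subtractf sum_distrib_left)
  finally have sY': "(\<Sum>i<n. Y i) \<le> real n * (real n * (2 * (real n * real n * a))) - 2 * (\<Sum>i<n. \<Sum>k\<in>{1..n}. fV i k)" .
  have nX: "real n * X \<le> real n * (real n * (2 * (real n * real n * a)) - 2 * (\<Sum>k\<in>{1..n}. fU k))"
    using h3 sU by (intro mult_left_mono) auto
  have e4: "real n * (real n * (2 * (real n * real n * a))) = 2 * real n ^ 4 * a"
    by (simp add: power4_eq_xxxx)
  have "profit_cost n (M d) / (real n * a) + 2 * real n * (\<Sum>k\<in>{1..n}. fU k)
     + 2 * (\<Sum>i<n. \<Sum>k\<in>{1..n}. fV i k) \<le> real n * (b / a) + real n * (bd - bc) + 4 * real n ^ 4 * a"
  proof -
    have q1: "real n * (real n * (2 * (real n * real n * a)) - 2 * S) = 2 * real n ^ 4 * a - 2 * real n * S" for S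
      by (simp add: algebra_simps power4_eq_xxxx)
    show ?thesis using hdiv sA' sY' nX e4 q1[of "\<Sum>k\<in>{1..n}. fU k"] by linarith
  qed
  thus ?thesis unfolding fU_def fV_def bd_def bc_def d_def c_def l_def .
qed



lemma F3_bdd:
  assumes v: "valid_profile n t"
  shows "bdd_above {(c - real n) * real (card S) | c S.
       c \<ge> 0 \<and> S \<subseteq> {..<n} \<and> card S \<ge> 3 \<and> (\<forall>i\<in>S. valuation i (t i) S \<ge> c)}"
proof (rule bdd_aboveI[where M = "real n * real n * (\<Sum>j<n. t j)"])
  fix x assume "x \<in> {(c - real n) * real (card S) | c S.
       c \<ge> 0 \<and> S \<subseteq> {..<n} \<and> card S \<ge> 3 \<and> (\<forall>i\<in>S. valuation i (t i) S \<ge> c)}"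
  then obtain c S where x: "x = (c - real n) * real (card S)" and c0: "c \<ge> 0"
    and sub: "S \<subseteq> {..<n}" and cS: "card S \<ge> 3" and val: "\<forall>i\<in>S. valuation i (t i) S \<ge> c"
    by blast
  have "S \<noteq> {}" using cS by auto
  then obtain i where iS: "i \<in> S" by blast
  hence i: "i < n" using sub by auto
  have ti: "t i \<ge> 0" using v i by (simp add: valid_profile_def)
  have ck: "card S \<le> n" using card_mono[OF finite_lessThan sub] by simp
  have ci: "c \<le> real (card S) * t i" using val iS by (simp add: valuation_def)
  have "0 \<le> real n * real (card S)" by simp
  moreover have "x = c * real (card S) - real n * real (card S)" using x by (simp add: algebra_simps)
  ultimately have "x \<le> c * real (card S)" by linarith
  also have "\<dots> \<le> (real (card S) * t i) * real (card S)" using ci by (simp add: mult_right_mono)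
  also have "\<dots> \<le> (real n * t i) * real n"
    using ck ti by (intro mult_mono) (auto intro: mult_right_mono)
  also have "\<dots> \<le> real n * real n * (\<Sum>j<n. t j)"
  proof -
    have "t i \<le> (\<Sum>j<n. t j)" using v i by (intro member_le_sum) (auto simp: valid_profile_def)
    thus ?thesis by (simp add: mult_left_mono algebra_simps)
  qed
  finally show "x \<le> real n * real n * (\<Sum>j<n. t j)" .
qed

lemma F3_lb:
  assumes v: "valid_profile n t" and "c \<ge> 0" "S \<subseteq> {..<n}" "card S \<ge> 3"
    "\<forall>i\<in>S. valuation i (t i) S \<ge> c"
  shows "(c - real n) * real (card S) \<le> F3_cost n t"
  unfolding F3_cost_def
  by (rule cSup_upper) (use assms F3_bdd[OF v] in blast)+

lemma F3_nonneg:
  assumes v: "valid_profile n t" and n3: "n \<ge> 3" and b: "\<forall>j<n. 1 \<le> t j"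
  shows "0 \<le> F3_cost n t"
proof -
  have "(real n - real n) * real (card {..<n}) \<le> F3_cost n t"
    using b n3 by (intro F3_lb[OF v]) (auto simp: valuation_def)
  thus ?thesis by simp
qed

lemma F3_dg:
  assumes a: "0 \<le> a" and n3: "n \<ge> 3"
  shows "real n * real n * a \<le> F3_cost n (dg n a)"
proof -
  have "(real n * (1 + a) - real n) * real (card {..<n}) \<le> F3_cost n (dg n a)"
    using a n3 by (intro F3_lb[OF dg_valid[OF a]]) (auto simp: valuation_def dg_def)
  thus ?thesis by (simp add: algebra_simps)
qed



theorem claim2:
  fixes n :: nat and L :: real
    and \<Omega> :: "'w measure" and mech :: "'w \<Rightarrow> mechanism"
  assumes "n \<ge> 4" and "L \<ge> 1"
    and "prob_space \<Omega>"
    and "\<forall>\<omega>\<in>space \<Omega>. det_mechanism n (mech \<omega>) \<and> truthful n (mech \<omega>)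
                         \<and> indiv_rational n (mech \<omega>)"
    and "\<forall>t. valid_profile n t \<longrightarrow>
           integrable \<Omega> (\<lambda>\<omega>. profit_cost n (mech \<omega> t)) \<and>
           (\<integral>\<omega>. profit_cost n (mech \<omega> t) \<partial>\<Omega>) \<ge> F3_cost n t / L"
  shows False
proof -
  have n4: "n \<ge> 4" and L1: "L \<ge> 1" using assms(1,2) .
  interpret P: prob_space \<Omega> by (rule assms(3))
  have mech: "det_mechanism n (mech \<omega>)" "truthful n (mech \<omega>)" "indiv_rational n (mech \<omega>)"
    if "\<omega> \<in> space \<Omega>" for \<omega> using assms(4) that by blast+
  define f where "f t = (\<lambda>\<omega>. profit_cost n (mech \<omega> t))" for t
  have intf: "integrable \<Omega> (f t)" if "valid_profile n t" for t using assms(5) that unfolding f_def by blast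
  have Ef: "F3_cost n t / L \<le> integral\<^sup>L \<Omega> (f t)" if "valid_profile n t" for t
    using assms(5) that unfolding f_def by blast
  have Lpos: "0 < L" using L1 by simp
  have Ef0: "0 \<le> integral\<^sup>L \<Omega> (f t)" if v: "valid_profile n t" and b: "\<forall>j<n. 1 \<le> t j" for t
  proof -
    have "0 \<le> F3_cost n t" using F3_nonneg[OF v _ b] n4 by simp
    hence "0 \<le> F3_cost n t / L" using Lpos by simp
    thus ?thesis using Ef[OF v] by linarith
  qed
  have Efd: "real n * real n * x / L \<le> integral\<^sup>L \<Omega> (f (dg n x))" if x: "0 \<le> x" for x
  proof -
    have "real n * real n * x / L \<le> F3_cost n (dg n x) / L"
      using F3_dg[OF x] n4 Lpos by (simp add: divide_right_mono)
    thus ?thesis using Ef[OF dg_valid[OF x]] by linarith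
  qed
  define K :: nat where "K = nat \<lceil>4*L\<rceil> + 1"
  have KL: "4 * L < real K" unfolding K_def using real_nat_ceiling_ge[of "4*L"] by simp
  have Kpos: "0 < real K" using KL Lpos by linarith
  define \<rho> where "\<rho> = 1 / (2*L)"
  define m0 where "m0 = 1 / (4 * real n ^ 3 * real K)"
  define a where "a j = m0 * \<rho> ^ j" for j
  have npos: "0 < real n" using n4 by simp
  have rpos: "0 < \<rho>" and rle: "\<rho> \<le> 1" using Lpos L1 by (auto simp: \<rho>_def field_simps)
  have m0pos: "0 < m0" using npos Kpos by (simp add: m0_def)
  have apos: "0 < a j" for j using m0pos rpos by (simp add: a_def)
  have aSuc: "a (Suc j) = \<rho> * a j" for j by (simp add: a_def)
  have aSle: "a (Suc j) \<le> a j" for j using aSuc[of j] apos[of j] rle by (simp add: mult_left_le_one_le)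
  have ale: "a j \<le> m0" for j
    using m0pos rpos rle by (simp add: a_def mult_left_le power_le_one)
  have nm0: "real n * m0 \<le> 1/2"
  proof -
    have "real n * m0 = 1 / (4 * real n ^ 2 * real K)" using npos by (simp add: m0_def power2_eq_square power3_eq_cube)
    also have "\<dots> \<le> 1/2" using npos Kpos n4
    proof -
      have K1: "1 \<le> real K" unfolding K_def by simp
      have n1: "1 \<le> real n ^ 2" using n4 by (simp add: one_le_power)
      have "1 * 1 \<le> real n ^ 2 * real K" using K1 n1 by (intro mult_mono) auto
      hence "1 \<le> real n ^ 2 * real K" by simp
      thus ?thesis by (simp add: field_simps)
    qed
    finally show ?thesis .
  qed
  have na: "real n * a j \<le> 1/2" for j
    using mult_left_mono[OF ale[of j], of "real n"] npos nm0 by linarith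
  define H where "H j \<omega> = f (dg n (a j)) \<omega> / (real n * a j)
     + 2 * real n * (\<Sum>k\<in>{1..n}. f (pth (dg n (a (Suc j))) (dg n (a j)) k) \<omega>)
     + 2 * (\<Sum>i<n. \<Sum>k\<in>{1..n}. f (pth (dg n (a (Suc j))) ((dg n (a j))(i := 1 + a (Suc j))) k) \<omega>)"
    for j \<omega>
  define \<beta> where "\<beta> j \<omega> = (of_bool (full n (mech \<omega> (dg n (a j)))) :: real)" for j \<omega>
  have pw: "H j \<omega> \<le> real n * \<rho> + real n * (\<beta> j \<omega> - \<beta> (Suc j) \<omega>) + 4 * real n ^ 4 * a j"
    if w: "\<omega> \<in> space \<Omega>" for j \<omega>
  proof -
    have r: "a (Suc j) / a j = \<rho>" using aSuc[of j] apos[of j] by simp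
    show ?thesis
      using key_det[OF mech(2,1,3)[OF w] less_imp_le[OF apos[of "Suc j"]] aSle[of j] apos[of j] na[of j]] n4 r
      unfolding H_def \<beta>_def f_def by simp
  qed
  define c where "c j = dg n (a (Suc j))" for j
  define d where "d j = dg n (a j)" for j
  define l where "l j i = (dg n (a j))(i := 1 + a (Suc j))" for j i
  have vc: "valid_profile n (c j)" for j unfolding c_def using dg_valid apos less_imp_le by blast
  have vd: "valid_profile n (d j)" for j unfolding d_def using dg_valid apos less_imp_le by blast
  have vl: "valid_profile n (l j i)" for j i
    unfolding l_def using valid_upd[OF vd[unfolded d_def]] apos[of "Suc j"] by simp
  have bc: "\<forall>j'<n. 1 \<le> c j j' \<and> c j j' \<le> 1 + a j" for j
    using apos[of "Suc j"] aSle[of j] by (simp add: c_def dg_def)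
  have bd: "\<forall>j'<n. 1 \<le> d j j' \<and> d j j' \<le> 1 + a j" for j
    using apos[of j] by (simp add: d_def dg_def)
  have bl: "\<forall>j'<n. 1 \<le> l j i j' \<and> l j i j' \<le> 1 + a j" for j i
    using apos[of "Suc j"] apos[of j] aSle[of j] by (simp add: l_def dg_def)
  have iU: "integrable \<Omega> (f (pth (c j) (d j) k))" for j k using intf[OF pth_valid[OF vc vd]] .
  have iV: "integrable \<Omega> (f (pth (c j) (l j i) k))" for j i k using intf[OF pth_valid[OF vc vl]] .
  have iD: "integrable \<Omega> (f (d j))" for j using intf[OF vd] .
  have EU: "0 \<le> integral\<^sup>L \<Omega> (f (pth (c j) (d j) k))" for j k
    using Ef0[OF pth_valid[OF vc vd]] pth_bnd[OF bc bd] by simp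
  have EV: "0 \<le> integral\<^sup>L \<Omega> (f (pth (c j) (l j i) k))" for j i k
    using Ef0[OF pth_valid[OF vc vl]] pth_bnd[OF bc bl] by simp
  have H': "H j = (\<lambda>\<omega>. f (d j) \<omega> / (real n * a j)
     + 2 * real n * (\<Sum>k\<in>{1..n}. f (pth (c j) (d j) k) \<omega>)
     + 2 * (\<Sum>i<n. \<Sum>k\<in>{1..n}. f (pth (c j) (l j i) k) \<omega>))" for j
    unfolding H_def c_def d_def l_def by simp
  have intH: "integrable \<Omega> (H j)" for j
    unfolding H' using iU iV iD by simp
  have IH: "integral\<^sup>L \<Omega> (H j) = integral\<^sup>L \<Omega> (f (d j)) / (real n * a j)
     + 2 * real n * (\<Sum>k\<in>{1..n}. integral\<^sup>L \<Omega> (f (pth (c j) (d j) k)))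
     + 2 * (\<Sum>i<n. \<Sum>k\<in>{1..n}. integral\<^sup>L \<Omega> (f (pth (c j) (l j i) k)))" for j
    unfolding H' using iU iV iD by (simp add: integral_sum)
  have lowH: "real n / L \<le> integral\<^sup>L \<Omega> (H j)" for j
  proof -
    have s1: "0 \<le> (\<Sum>k\<in>{1..n}. integral\<^sup>L \<Omega> (f (pth (c j) (d j) k)))" using EU by (intro sum_nonneg) auto
    have s2: "0 \<le> (\<Sum>i<n. \<Sum>k\<in>{1..n}. integral\<^sup>L \<Omega> (f (pth (c j) (l j i) k)))"
      using EV by (intro sum_nonneg) auto
    have "real n * real n * a j / L / (real n * a j) \<le> integral\<^sup>L \<Omega> (f (d j)) / (real n * a j)"
      using Efd[of "a j"] apos[of j] npos unfolding d_def by (intro divide_right_mono) auto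
    moreover have "real n * real n * a j / L / (real n * a j) = real n / L"
      using apos[of j] npos by (simp add: field_simps)
    ultimately show ?thesis unfolding IH using s1 s2 npos
      by (smt (verit) mult_nonneg_nonneg)
  qed
  have pwsum: "(\<Sum>j<K. H j \<omega>) \<le> real n * real K * \<rho> + real n + real n" if w: "\<omega> \<in> space \<Omega>" for \<omega>
  proof -
    have "(\<Sum>j<K. H j \<omega>) \<le> (\<Sum>j<K. real n * \<rho> + real n * (\<beta> j \<omega> - \<beta> (Suc j) \<omega>) + 4 * real n ^ 4 * a j)"
      using pw[OF w] by (intro sum_mono) auto
    also have "\<dots> = real K * (real n * \<rho>) + real n * (\<beta> 0 \<omega> - \<beta> K \<omega>) + 4 * real n ^ 4 * (\<Sum>j<K. a j)"
    proof -
      have tel: "(\<Sum>j<K. \<beta> j \<omega> - \<beta> (Suc j) \<omega>) = \<beta> 0 \<omega> - \<beta> K \<omega>" by (rule sum_lessThan_telescope')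
      show ?thesis
        by (simp only: sum.distrib sum_distrib_left[symmetric] tel sum_constant card_lessThan) (simp add: algebra_simps)
    qed
    also have "\<dots> \<le> real K * (real n * \<rho>) + real n * 1 + 4 * real n ^ 4 * (real K * m0)"
    proof -
      have "\<beta> 0 \<omega> - \<beta> K \<omega> \<le> 1" by (simp add: \<beta>_def)
      hence t1: "real n * (\<beta> 0 \<omega> - \<beta> K \<omega>) \<le> real n * 1" using npos by (intro mult_left_mono) auto
      have "(\<Sum>j<K. a j) \<le> (\<Sum>j<K. m0)" using ale by (intro sum_mono) auto
      hence "(\<Sum>j<K. a j) \<le> real K * m0" by simp
      hence t2: "4 * real n ^ 4 * (\<Sum>j<K. a j) \<le> 4 * real n ^ 4 * (real K * m0)" by (intro mult_left_mono) auto
      show ?thesis using t1 t2 by linarith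
    qed
    also have "\<dots> = real n * real K * \<rho> + real n + real n"
      using npos Kpos by (simp add: m0_def field_simps power4_eq_xxxx power3_eq_cube)
    finally show ?thesis .
  qed
  have "(\<Sum>j<K. real n / L) \<le> (\<Sum>j<K. integral\<^sup>L \<Omega> (H j))" using lowH by (intro sum_mono) auto
  also have "\<dots> = integral\<^sup>L \<Omega> (\<lambda>\<omega>. \<Sum>j<K. H j \<omega>)" using intH by (simp add: integral_sum)
  also have "\<dots> \<le> integral\<^sup>L \<Omega> (\<lambda>\<omega>. real n * real K * \<rho> + real n + real n)"
    using intH pwsum by (intro integral_mono) auto
  also have "\<dots> = real n * real K * \<rho> + real n + real n" by (simp add: P.prob_space)
  finally have fin: "real K * (real n / L) \<le> real n * real K * \<rho> + real n + real n" by simp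
  define X where "X = real n * (real K / L)"
  have e1: "real K * (real n / L) = X" unfolding X_def by simp
  have e2: "real n * real K * \<rho> = X / 2" unfolding X_def by (simp add: \<rho>_def)
  have "X \<le> X / 2 + real n + real n" using fin unfolding e1 e2 .
  hence "X \<le> real n * 4" by linarith
  hence "real n * (real K / L) \<le> real n * 4" unfolding X_def .
  hence "real K / L \<le> 4" using mult_le_cancel_left_pos[OF npos] by blast
  hence "real K \<le> 4 * L" using Lpos by (simp add: field_simps)
  thus False using KL by linarith
qed


end
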